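(* Fix $\bar\alpha\in(0,1)$. For every $k\ge1$ and every $\alpha_1,\dots,\alpha_k\in[0,1]$ with $\max_\ell\alpha_\ell=\bar\alpha$, the accountability weights $w_j=(\prod_{\ell=1}^{j}\alpha_\ell)(1-\alpha_{j+1})$ for $j<k$ and $w_k=\prod_{\ell=1}^k\alpha_\ell$ satisfy $\max_j w_j\le 1-(1-\bar\alpha)^k<1$, and the bound $1-(1-\bar\alpha)^k$ converges to $1$ from below as $k\to\infty$.
   Context: The $\alpha_\ell$ are delegation degrees along a delegation chain of length $k$, and $w_j$ is the accountability weight of the $j$-th agent. *)

theory Defs
  imports Complex_Main
begin

definition acc_weight :: "(nat \<Rightarrow> real) \<Rightarrow> nat \<Rightarrow> nat \<Rightarrow> real" where
  "acc_weight \<alpha> k j =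
     (if j < k then (\<Prod>l=1..j. \<alpha> l) * (1 - \<alpha> (Suc j)) else (\<Prod>l=1..k. \<alpha> l))"

end

theory Submission
  imports Defs
begin

lemma prod_le_first:
  fixes \<alpha> :: "nat \<Rightarrow> real"
  assumes "1 \<le> j" "\<forall>l\<in>{1..j}. 0 \<le> \<alpha> l \<and> \<alpha> l \<le> 1"
  shows "(\<Prod>l=1..j. \<alpha> l) \<le> \<alpha> 1"
proof -
  have s: "{1..j} = insert 1 {2..j}" using assms(1) by auto
  have "(\<Prod>l=1..j. \<alpha> l) = \<alpha> 1 * (\<Prod>l=2..j. \<alpha> l)" unfolding s by (subst prod.insert) auto
  moreover have "(\<Prod>l=2..j. \<alpha> l) \<le> 1" by (rule prod_le_1) (use assms in auto)
  moreover have "(\<Prod>l=2..j. \<alpha> l) \<ge> 0" by (rule prod_nonneg) (use assms in auto)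
  moreover have "0 \<le> \<alpha> 1" using assms by auto
  ultimately show ?thesis by (simp add: mult_left_le)
qed

lemma pow_bound:
  fixes a :: real
  assumes "0 < a" "a < 1" "k \<ge> 1"
  shows "(1 - a) ^ k \<le> 1 - a" "0 < (1 - a) ^ k"
proof -
  show "(1 - a) ^ k \<le> 1 - a" using power_decreasing[of 1 k "1-a"] assms by auto
  show "0 < (1 - a) ^ k" using assms by auto
qed

theorem corollary2:
  fixes abar :: real
  assumes "0 < abar" and "abar < 1"
  shows "(\<forall>k::nat. \<forall>\<alpha>::nat \<Rightarrow> real. k \<ge> 1 \<longrightarrow> (\<forall>l\<in>{1..k}. 0 \<le> \<alpha> l \<and> \<alpha> l \<le> 1)
            \<longrightarrow> Max (\<alpha> ` {1..k}) = abar
            \<longrightarrow> Max (acc_weight \<alpha> k ` {1..k}) \<le> 1 - (1 - abar) ^ k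
                \<and> 1 - (1 - abar) ^ k < 1)
         \<and> filterlim (\<lambda>k::nat. 1 - (1 - abar) ^ k) (at_left 1) sequentially"
proof (intro conjI allI impI)
  fix k :: nat and \<alpha> :: "nat \<Rightarrow> real"
  assume k: "k \<ge> 1" and r: "\<forall>l\<in>{1..k}. 0 \<le> \<alpha> l \<and> \<alpha> l \<le> 1"
    and m: "Max (\<alpha> ` {1..k}) = abar"
  have a1: "\<alpha> 1 \<le> abar" using m k by (metis Max_ge atLeastAtMost_iff finite_atLeastAtMost finite_imageI image_eqI order_refl)
  have "\<forall>w\<in>acc_weight \<alpha> k ` {1..k}. w \<le> abar"
  proof
    fix w assume "w \<in> acc_weight \<alpha> k ` {1..k}"
    then obtain j where j: "j \<in> {1..k}" "w = acc_weight \<alpha> k j" by auto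
    show "w \<le> abar"
    proof (cases "j < k")
      case True
      have rj: "\<forall>l\<in>{1..j}. 0 \<le> \<alpha> l \<and> \<alpha> l \<le> 1" using r True by auto
      have p: "(\<Prod>l=1..j. \<alpha> l) \<le> \<alpha> 1" using prod_le_first[OF _ rj] j by auto
      have p0: "(\<Prod>l=1..j. \<alpha> l) \<ge> 0" using rj by (intro prod_nonneg) auto
      have q: "0 \<le> 1 - \<alpha> (Suc j)" "1 - \<alpha> (Suc j) \<le> 1" using r True j by auto
      have "w = (\<Prod>l=1..j. \<alpha> l) * (1 - \<alpha> (Suc j))" using j True by (simp add: acc_weight_def)
      also have "\<dots> \<le> (\<Prod>l=1..j. \<alpha> l)" using p0 q by (simp add: mult_left_le)
      finally show ?thesis using p a1 by linarith
    next
      case False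
      have "w = (\<Prod>l=1..k. \<alpha> l)" using j False by (simp add: acc_weight_def)
      also have "\<dots> \<le> \<alpha> 1" using prod_le_first[OF k r] .
      finally show ?thesis using a1 by linarith
    qed
  qed
  hence "Max (acc_weight \<alpha> k ` {1..k}) \<le> abar" using k by (subst Max_le_iff) auto
  thus "Max (acc_weight \<alpha> k ` {1..k}) \<le> 1 - (1 - abar) ^ k"
    using pow_bound[OF assms k] by linarith
  show "1 - (1 - abar) ^ k < 1" using pow_bound[OF assms k] by linarith
next
  have "(\<lambda>k::nat. (1 - abar) ^ k) \<longlonglongrightarrow> 0"
    using assms by (intro LIMSEQ_realpow_zero) auto
  hence t: "(\<lambda>k::nat. 1 - (1 - abar) ^ k) \<longlonglongrightarrow> 1"
    using tendsto_diff[OF tendsto_const[of 1]] by fastforce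
  have e: "eventually (\<lambda>k::nat. 1 - (1 - abar) ^ k < 1) sequentially"
    using assms by (intro always_eventually) auto
  show "filterlim (\<lambda>k::nat. 1 - (1 - abar) ^ k) (at_left 1) sequentially"
    by (rule tendsto_imp_filterlim_at_left[OF t e])
qed

end
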